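(* $$\mathcal{I}_1\le\frac{4}{n^2}\cdot\frac{\phi_{\max}}{\phi_{\min}}.$$
   Context: Fix a prompt $x$, a countable response space, full-support conditional distributions $\pi_{\mathrm{target}},\pi_{\mathrm{gen}}$, a reward $r$, $\beta>0$, and $n\ge1$. Let $\phi_\beta(y|x)=\frac{\pi_{\mathrm{target}}(y|x)}{\pi_{\mathrm{gen}}(y|x)}e^{\beta r(y|x)}$, $\phi_{\max}=\max_{x,y}\phi_\beta(y|x)$, $\phi_{\min}=\min_{x,y}\phi_\beta(y|x)$, and $\Phi_\beta(s)=\mathbb{E}_{Y\sim\pi_{\mathrm{gen}}(\cdot|x)}[e^{-s\phi_\beta(Y|x)}]$ for $s\ge0$. Let $p_n=\log(n^4)/n$, $\mathcal{R}_1=\{(s_1,s_2)\in[0,\infty)^2:\min\{\Phi_\beta(s_1),\Phi_\beta(s_2)\}\le1-p_n\}$ and $$\mathcal{I}_1=\frac{1}{1-e^{-n}}\int_{\mathcal{R}_1}\big(n^2\Phi_\beta(s_1)\Phi_\beta(s_2)+n\big)\big(-\Phi_\beta'(0)\big)\big(-\Phi_\beta'(s_1+s_2)\big)\exp\big(n[\Phi_\beta(s_1)\Phi_\beta(s_2)-1]\big)\,ds_1\,ds_2.$$ *)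

theory Defs
  imports "HOL-Analysis.Analysis" "HOL-Library.Countable"
begin

definition phi_beta :: "('x \<Rightarrow> 'y \<Rightarrow> real) \<Rightarrow> ('x \<Rightarrow> 'y \<Rightarrow> real) \<Rightarrow> ('x \<Rightarrow> 'y \<Rightarrow> real) \<Rightarrow> real \<Rightarrow> 'x \<Rightarrow> 'y \<Rightarrow> real" where
  "phi_beta pt pg r \<beta> x y = pt x y / pg x y * exp (\<beta> * r x y)"

text \<open>phi_max = max over (x,y), phi_min = min over (x,y) (existence of the extrema is assumed in the theorem)\<close>
definition phi_max where
  "phi_max pt pg r \<beta> = (SUP xy. phi_beta pt pg r \<beta> (fst xy) (snd xy))"
definition phi_min where
  "phi_min pt pg r \<beta> = (INF xy. phi_beta pt pg r \<beta> (fst xy) (snd xy))"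

definition Phi_beta :: "('x \<Rightarrow> 'y \<Rightarrow> real) \<Rightarrow> ('x \<Rightarrow> 'y \<Rightarrow> real) \<Rightarrow> ('x \<Rightarrow> 'y \<Rightarrow> real) \<Rightarrow> real \<Rightarrow> 'x \<Rightarrow> real \<Rightarrow> real" where
  "Phi_beta pt pg r \<beta> x s = (\<Sum>\<^sub>\<infinity>y. pg x y * exp (- s * phi_beta pt pg r \<beta> x y))"

definition p_n :: "nat \<Rightarrow> real" where
  "p_n n = ln (real n ^ 4) / real n"

definition R1 :: "(real \<Rightarrow> real) \<Rightarrow> nat \<Rightarrow> (real \<times> real) set" where
  "R1 Phi n = {(s1, s2). 0 \<le> s1 \<and> 0 \<le> s2 \<and> min (Phi s1) (Phi s2) \<le> 1 - p_n n}"

text \<open>I_1, as an extended nonnegative real (the integrand is nonnegative; a non-integrable integrand gives \<infinity>)\<close>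
definition I1 :: "(real \<Rightarrow> real) \<Rightarrow> nat \<Rightarrow> ennreal" where
  "I1 Phi n = ennreal (1 / (1 - exp (- real n))) *
     (\<integral>\<^sup>+ p. ennreal (indicator (R1 Phi n) p *
        ((real n ^ 2 * Phi (fst p) * Phi (snd p) + real n) * (- deriv Phi 0) *
         (- deriv Phi (fst p + snd p)) * exp (real n * (Phi (fst p) * Phi (snd p) - 1)))) \<partial>lborel)"

end

theory Submission
  imports Defs
begin

lemma sumbl:
  fixes p f :: "'y \<Rightarrow> real"
  assumes p0: "\<And>y. p y \<ge> 0" and ps: "p summable_on UNIV" and fb: "\<And>y. \<bar>f y\<bar> \<le> B"
  shows "(\<lambda>y. p y * f y) summable_on UNIV"
proof -
  have "(\<lambda>y. p y * B) summable_on UNIV" using ps by (rule summable_on_cmult_left)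
  then have "(\<lambda>y. norm (p y * f y)) summable_on UNIV"
    apply (rule summable_on_comparison_test)
    using p0 fb by (auto simp: abs_mult intro: mult_left_mono)
  then show ?thesis by (rule abs_summable_summable)
qed

lemma exp_rem:
  fixes x :: real
  assumes "\<bar>x\<bar> \<le> 1"
  shows "\<bar>exp x - 1 - x\<bar> \<le> x^2"
proof (cases "x \<ge> 0")
  case True
  have a: "1 + x \<le> exp x" by (rule exp_ge_add_one_self)
  have b: "exp x \<le> 1 + x + x^2" using exp_bound[of x] assms True by auto
  have c: "0 \<le> x^2" by simp
  have d: "exp x - 1 - x \<le> x^2" using b by linarith
  have e: "-(x^2) \<le> exp x - 1 - x" using a c by linarith
  show ?thesis using d e by (intro abs_leI) linarith+
next
  case False
  have "exp (-x) \<ge> 1 - x" using exp_ge_add_one_self[of "-x"] by simp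
  then have "exp x \<le> 1 / (1 - x)" using False by (simp add: exp_minus field_simps)
  also have "\<dots> \<le> 1 + x + x^2"
  proof -
    have "x * (x * x) \<le> 0" using False by (simp add: mult_nonpos_nonneg)
    then have "1 \<le> (1 - x) * (1 + x + x^2)" by (simp add: algebra_simps power2_eq_square)
    then show ?thesis using False by (simp add: divide_le_eq mult.commute)
  qed
  finally have b: "exp x \<le> 1 + x + x^2" .
  have a: "1 + x \<le> exp x" by (rule exp_ge_add_one_self)
  have c: "0 \<le> x^2" by simp
  have d: "exp x - 1 - x \<le> x^2" using b by linarith
  have e: "-(x^2) \<le> exp x - 1 - x" using a c by linarith
  show ?thesis using d e by (intro abs_leI) linarith+
qed

lemma abs_infsum_le:
  fixes p f :: "'y \<Rightarrow> real"
  assumes p0: "\<And>y. p y \<ge> 0" and ps: "p summable_on UNIV" and fb: "\<And>y. \<bar>f y\<bar> \<le> c"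
  shows "\<bar>\<Sum>\<^sub>\<infinity>y. p y * f y\<bar> \<le> c * (\<Sum>\<^sub>\<infinity>y. p y)"
proof -
  have s1: "(\<lambda>y. p y * f y) summable_on UNIV" using sumbl[OF p0 ps fb] .
  have s2: "(\<lambda>y. p y * c) summable_on UNIV" using ps by (rule summable_on_cmult_left)
  have s3: "(\<lambda>y. - (p y * f y)) summable_on UNIV" using s1 by (simp add: summable_on_uminus)
  have e: "(\<Sum>\<^sub>\<infinity>y. p y * c) = c * (\<Sum>\<^sub>\<infinity>y. p y)"
    by (subst infsum_cmult_left') (simp add: mult.commute)
  have "(\<Sum>\<^sub>\<infinity>y. p y * f y) \<le> (\<Sum>\<^sub>\<infinity>y. p y * c)"
    by (rule infsum_mono[OF s1 s2]) (use p0 fb in \<open>auto intro: mult_left_mono simp: abs_le_iff\<close>)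
  moreover have "(\<Sum>\<^sub>\<infinity>y. - (p y * f y)) \<le> (\<Sum>\<^sub>\<infinity>y. p y * c)"
  proof (rule infsum_mono[OF s3 s2])
    fix y
    have "p y * (- f y) \<le> p y * c" using p0[of y] fb[of y] by (intro mult_left_mono) auto
    then show "- (p y * f y) \<le> p y * c" by simp
  qed
  ultimately show ?thesis unfolding e infsum_uminus by (intro abs_leI) linarith+
qed

lemma exp_bd:
  fixes t a M :: real
  assumes "0 \<le> a" "a \<le> M"
  shows "exp (- t * a) \<le> exp (\<bar>t\<bar> * M)"
proof -
  have "- t * a \<le> \<bar>t\<bar> * a" by (smt (verit) assms(1) mult_right_mono abs_ge_self abs_ge_minus_self mult_minus_left)
  also have "\<dots> \<le> \<bar>t\<bar> * M" using assms by (intro mult_left_mono) auto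
  finally show ?thesis by simp
qed

lemma deriv_S:
  fixes p w \<phi> :: "'y \<Rightarrow> real"
  assumes p0: "\<And>y. p y \<ge> 0" and ps: "p summable_on UNIV"
    and wb: "\<And>y. \<bar>w y\<bar> \<le> B" and f0: "\<And>y. 0 \<le> \<phi> y" and fM: "\<And>y. \<phi> y \<le> M" and M0: "M > 0"
  shows "((\<lambda>s. \<Sum>\<^sub>\<infinity>y. p y * (w y * exp (- s * \<phi> y))) has_field_derivative
           - (\<Sum>\<^sub>\<infinity>y. p y * (w y * \<phi> y * exp (- s * \<phi> y)))) (at s)"
proof -
  define S where "S = (\<lambda>s. \<Sum>\<^sub>\<infinity>y. p y * (w y * exp (- s * \<phi> y)))"
  define D where "D = (\<Sum>\<^sub>\<infinity>y. p y * (w y * \<phi> y * exp (- s * \<phi> y)))"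
  have B0: "B \<ge> 0" using wb[of undefined] by linarith
  have sumS: "(\<lambda>y. p y * (w y * exp (- t * \<phi> y))) summable_on UNIV" for t
  proof (rule sumbl[OF p0 ps])
    fix y
    have "\<bar>w y * exp (- t * \<phi> y)\<bar> = \<bar>w y\<bar> * exp (- t * \<phi> y)" by (simp add: abs_mult)
    also have "\<dots> \<le> B * exp (\<bar>t\<bar> * M)"
      using wb[of y] exp_bd[OF f0 fM, of t] B0 by (intro mult_mono) auto
    finally show "\<bar>w y * exp (- t * \<phi> y)\<bar> \<le> B * exp (\<bar>t\<bar> * M)" .
  qed
  have sumD: "(\<lambda>y. p y * (w y * \<phi> y * exp (- t * \<phi> y))) summable_on UNIV" for t
  proof (rule sumbl[OF p0 ps])
    fix y
    have "\<bar>w y * \<phi> y * exp (- t * \<phi> y)\<bar> = \<bar>w y\<bar> * \<phi> y * exp (- t * \<phi> y)" using f0[of y] by (simp add: abs_mult)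
    also have "\<dots> \<le> B * M * exp (\<bar>t\<bar> * M)"
      using wb[of y] exp_bd[OF f0 fM, of t] B0 f0[of y] fM[of y] by (intro mult_mono) auto
    finally show "\<bar>w y * \<phi> y * exp (- t * \<phi> y)\<bar> \<le> B * M * exp (\<bar>t\<bar> * M)" .
  qed
  define C where "C = B * exp (\<bar>s\<bar> * M) * M^2 * (\<Sum>\<^sub>\<infinity>y. p y)"
  have key: "\<bar>(S (s + h) - S s) / h - - D\<bar> \<le> C * \<bar>h\<bar>" if h0: "h \<noteq> 0" and hM: "\<bar>h\<bar> \<le> 1 / M" for h
  proof -
    have eq: "S (s + h) - S s + h * D =
      (\<Sum>\<^sub>\<infinity>y. p y * (w y * exp (- s * \<phi> y) * (exp (- h * \<phi> y) - 1 - (- h * \<phi> y))))"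
    proof -
      have "(\<Sum>\<^sub>\<infinity>y. p y * (w y * exp (- s * \<phi> y) * (exp (- h * \<phi> y) - 1 - (- h * \<phi> y))))
        = (\<Sum>\<^sub>\<infinity>y. p y * (w y * exp (- (s + h) * \<phi> y)) + - (p y * (w y * exp (- s * \<phi> y)))
              + h * (p y * (w y * \<phi> y * exp (- s * \<phi> y))))"
        by (rule infsum_cong) (simp add: algebra_simps flip: exp_add)
      also have "\<dots> = S (s + h) - S s + h * D"
      proof -
        have sa: "(\<lambda>y. p y * (w y * exp (- (s + h) * \<phi> y))) summable_on UNIV" by (rule sumS)
        have sb: "(\<lambda>y. - (p y * (w y * exp (- s * \<phi> y)))) summable_on UNIV"
          using sumS[of s] by (simp only: summable_on_uminus)
        have sc: "(\<lambda>y. h * (p y * (w y * \<phi> y * exp (- s * \<phi> y)))) summable_on UNIV"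
          using sumD[of s] by (rule summable_on_cmult_right)
        have "(\<Sum>\<^sub>\<infinity>y. p y * (w y * exp (- (s + h) * \<phi> y)) + - (p y * (w y * exp (- s * \<phi> y)))
              + h * (p y * (w y * \<phi> y * exp (- s * \<phi> y))))
          = (\<Sum>\<^sub>\<infinity>y. p y * (w y * exp (- (s + h) * \<phi> y)) + - (p y * (w y * exp (- s * \<phi> y))))
              + (\<Sum>\<^sub>\<infinity>y. h * (p y * (w y * \<phi> y * exp (- s * \<phi> y))))"
          by (rule infsum_add[OF summable_on_add[OF sa sb] sc])
        also have "\<dots> = S (s + h) + - S s + h * D"
          unfolding infsum_add[OF sa sb] infsum_uminus infsum_cmult_right' S_def D_def ..
        finally show ?thesis by simp
      qed
      finally show ?thesis by simp
    qed
    have "\<bar>S (s + h) - S s + h * D\<bar> \<le> (B * exp (\<bar>s\<bar> * M) * (M^2 * h^2)) * (\<Sum>\<^sub>\<infinity>y. p y)"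
      unfolding eq
    proof (rule abs_infsum_le[OF p0 ps])
      fix y
      have hp: "\<bar>- h * \<phi> y\<bar> \<le> 1"
      proof -
        have "\<bar>- h * \<phi> y\<bar> = \<bar>h\<bar> * \<phi> y" using f0[of y] by (simp add: abs_mult)
        also have "\<dots> \<le> (1 / M) * M" using hM fM[of y] f0[of y] by (intro mult_mono) auto
        finally show ?thesis using M0 by simp
      qed
      have "\<bar>w y * exp (- s * \<phi> y) * (exp (- h * \<phi> y) - 1 - (- h * \<phi> y))\<bar>
          = \<bar>w y\<bar> * exp (- s * \<phi> y) * \<bar>exp (- h * \<phi> y) - 1 - (- h * \<phi> y)\<bar>" by (simp add: abs_mult)
      also have "\<dots> \<le> B * exp (\<bar>s\<bar> * M) * (- h * \<phi> y)^2"
        using wb[of y] exp_bd[OF f0 fM, of s] B0 exp_rem[OF hp] by (intro mult_mono) auto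
      also have "(- h * \<phi> y)^2 \<le> M^2 * h^2"
      proof -
        have "(\<phi> y)^2 \<le> M^2" using f0[of y] fM[of y] by (intro power_mono) auto
        then have "h^2 * (\<phi> y)^2 \<le> h^2 * M^2" by (intro mult_left_mono) auto
        then show ?thesis by (simp add: power_mult_distrib mult.commute)
      qed
      then have "B * exp (\<bar>s\<bar> * M) * (- h * \<phi> y)^2 \<le> B * exp (\<bar>s\<bar> * M) * (M^2 * h^2)"
        using B0 by (intro mult_left_mono) auto
      finally show "\<bar>w y * exp (- s * \<phi> y) * (exp (- h * \<phi> y) - 1 - (- h * \<phi> y))\<bar>
          \<le> B * exp (\<bar>s\<bar> * M) * (M^2 * h^2)" .
    qed
    then have "\<bar>S (s + h) - S s + h * D\<bar> \<le> C * \<bar>h\<bar> * \<bar>h\<bar>"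
      unfolding C_def by (simp add: power2_eq_square mult_ac)
    moreover have "(S (s + h) - S s) / h - - D = (S (s + h) - S s + h * D) / h"
      using h0 by (simp add: field_simps)
    ultimately show ?thesis using h0 by (simp add: abs_divide divide_le_eq)
  qed
  have "((\<lambda>h. (S (s + h) - S s) / h - - D) \<longlongrightarrow> 0) (at 0)"
  proof (rule Lim_null_comparison)
    show "\<forall>\<^sub>F h in at 0. norm ((S (s + h) - S s) / h - - D) \<le> C * \<bar>h\<bar>"
      unfolding eventually_at
      by (rule exI[of _ "1 / M"]) (use M0 key in \<open>auto simp: dist_real_def\<close>)
    show "((\<lambda>h. C * \<bar>h\<bar>) \<longlongrightarrow> 0) (at 0)"
      by (rule tendsto_eq_intros | simp)+
  qed
  then have "(S has_field_derivative - D) (at s)"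
    unfolding DERIV_def by (subst Lim_null) simp
  then show ?thesis unfolding S_def D_def .
qed

lemma ennreal_infsum_nn:
  fixes f :: "'y \<Rightarrow> real"
  assumes f0: "\<And>y. f y \<ge> 0" and fs: "f summable_on UNIV"
  shows "ennreal (\<Sum>\<^sub>\<infinity>y. f y) = (\<integral>\<^sup>+ y. ennreal (f y) \<partial>count_space UNIV)"
proof -
  have "(\<lambda>y. norm (f y)) summable_on UNIV" using fs f0 by simp
  then have a: "Infinite_Set_Sum.abs_summable_on f UNIV" using abs_summable_equivalent[of f UNIV] by simp
  show ?thesis using nn_integral_conv_infsetsum[OF a] f0 infsetsum_infsum[OF a] by simp
qed

lemma exp1d:
  fixes l :: real
  assumes "l > 0"
  shows "(\<integral>\<^sup>+ x. ennreal (indicator {0..} x * exp (- l * x)) \<partial>lborel) = ennreal (1 / l)"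
  using nn_integral_has_integral_lebesgue[of "{0..}" "\<lambda>x. exp (- l * x)", OF _ has_integral_exp_minus_to_infinity[OF assms, of 0]]
  by simp

lemma exp2d:
  fixes l C :: real
  assumes l0: "l > 0" and C0: "C \<ge> 0"
  shows "(\<integral>\<^sup>+ q. ennreal (C * (indicator {0..} (fst q) * indicator {0..} (snd q)) * exp (- (fst q + snd q) * l)) \<partial>lborel)
     = ennreal (C / l^2)"
proof -
  let ?f = "\<lambda>q::real\<times>real. ennreal (C * (indicator {0..} (fst q) * indicator {0..} (snd q)) * exp (- (fst q + snd q) * l))"
  have meas: "?f \<in> borel_measurable (lborel \<Otimes>\<^sub>M lborel)"
    by measurable
  have "(\<integral>\<^sup>+ q. ?f q \<partial>lborel) = (\<integral>\<^sup>+ q. ?f q \<partial>(lborel \<Otimes>\<^sub>M lborel))"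
    by (simp add: lborel_prod)
  also have "\<dots> = (\<integral>\<^sup>+ x. \<integral>\<^sup>+ y. ?f (x, y) \<partial>lborel \<partial>lborel)"
    by (rule lborel.nn_integral_fst[OF meas, symmetric])
  also have "\<dots> = (\<integral>\<^sup>+ x. ennreal (C * indicator {0..} x * exp (- l * x)) * ennreal (1 / l) \<partial>lborel)"
  proof (rule nn_integral_cong)
    fix x :: real
    have "(\<integral>\<^sup>+ y. ?f (x, y) \<partial>lborel)
        = (\<integral>\<^sup>+ y. ennreal (C * indicator {0..} x * exp (- l * x)) * ennreal (indicator {0..} y * exp (- l * y)) \<partial>lborel)"
      by (rule nn_integral_cong) (simp add: C0 ennreal_mult'[symmetric] algebra_simps exp_add[symmetric] exp_diff)
    also have "\<dots> = ennreal (C * indicator {0..} x * exp (- l * x)) * (\<integral>\<^sup>+ y. ennreal (indicator {0..} y * exp (- l * y)) \<partial>lborel)"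
      by (rule nn_integral_cmult) measurable
    also have "\<dots> = ennreal (C * indicator {0..} x * exp (- l * x)) * ennreal (1 / l)"
      using exp1d[OF l0] by simp
    finally show "(\<integral>\<^sup>+ y. ?f (x, y) \<partial>lborel) = ennreal (C * indicator {0..} x * exp (- l * x)) * ennreal (1 / l)" .
  qed
  also have "\<dots> = (\<integral>\<^sup>+ x. ennreal (C / l) * ennreal (indicator {0..} x * exp (- l * x)) \<partial>lborel)"
  proof (rule nn_integral_cong)
    fix x :: real
    have "ennreal (C * indicator {0..} x * exp (- l * x)) * ennreal (1 / l) = ennreal (C * indicator {0..} x * exp (- l * x) * (1 / l))"
      by (rule ennreal_mult[symmetric]) (use C0 l0 in auto)
    also have "\<dots> = ennreal (C / l * (indicator {0..} x * exp (- l * x)))" by (simp add: mult.assoc)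
    also have "\<dots> = ennreal (C / l) * ennreal (indicator {0..} x * exp (- l * x))"
      by (rule ennreal_mult) (use C0 l0 in auto)
    finally show "ennreal (C * indicator {0..} x * exp (- l * x)) * ennreal (1 / l) = ennreal (C / l) * ennreal (indicator {0..} x * exp (- l * x))" .
  qed
  also have "\<dots> = ennreal (C / l) * ennreal (1 / l)"
    by (subst nn_integral_cmult) (measurable, use exp1d[OF l0] in simp)
  also have "\<dots> = ennreal (C / l^2)"
    using C0 l0 by (simp add: ennreal_mult'[symmetric] power2_eq_square)
  finally show ?thesis .
qed

lemma int_bound:
  fixes p \<phi> :: "'y::countable \<Rightarrow> real"
  assumes p0: "\<And>y. p y \<ge> 0" and ps: "(p has_sum 1) UNIV"
    and fm: "\<And>y. m \<le> \<phi> y" and fM: "\<And>y. \<phi> y \<le> M" and m0: "m > 0" and c0: "c \<ge> 0"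
  shows "(\<integral>\<^sup>+ q. ennreal (c * (indicator {0..} (fst q) * indicator {0..} (snd q)) *
            (\<Sum>\<^sub>\<infinity>y. p y * (\<phi> y * exp (- (fst q + snd q) * \<phi> y)))) \<partial>lborel) \<le> ennreal (c / m)"
proof -
  have psum: "p summable_on UNIV" using ps by (auto simp: summable_on_def)
  have p1: "(\<Sum>\<^sub>\<infinity>y. p y) = 1" using ps by (rule infsumI)
  have f0: "\<phi> y > 0" for y using fm[of y] m0 by linarith
  define F where "F = (\<lambda>y (q::real\<times>real). ennreal (c * (indicator {0..} (fst q) * indicator {0..} (snd q)) *
            (p y * (\<phi> y * exp (- (fst q + snd q) * \<phi> y)))))"
  have pt: "ennreal (c * (indicator {0..} (fst q) * indicator {0..} (snd q)) *
            (\<Sum>\<^sub>\<infinity>y. p y * (\<phi> y * exp (- (fst q + snd q) * \<phi> y))))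
        = (\<integral>\<^sup>+ y. F y q \<partial>count_space UNIV)" for q
  proof -
    let ?k = "c * (indicator {0..} (fst q) * indicator {0..} (snd q))"
    have k0: "?k \<ge> 0" using c0 by simp
    have sm: "(\<lambda>y. p y * (\<phi> y * exp (- (fst q + snd q) * \<phi> y))) summable_on UNIV"
    proof (rule sumbl[OF p0 psum])
      fix y
      have "\<bar>\<phi> y * exp (- (fst q + snd q) * \<phi> y)\<bar> = \<phi> y * exp (- (fst q + snd q) * \<phi> y)"
        using f0[of y] by simp
      also have "\<dots> \<le> M * exp (\<bar>fst q + snd q\<bar> * M)"
        using f0[of y] fM[of y] exp_bd[of "\<phi> y" M "fst q + snd q"] by (intro mult_mono) auto
      finally show "\<bar>\<phi> y * exp (- (fst q + snd q) * \<phi> y)\<bar> \<le> M * exp (\<bar>fst q + snd q\<bar> * M)" .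
    qed
    have "?k * (\<Sum>\<^sub>\<infinity>y. p y * (\<phi> y * exp (- (fst q + snd q) * \<phi> y)))
        = (\<Sum>\<^sub>\<infinity>y. ?k * (p y * (\<phi> y * exp (- (fst q + snd q) * \<phi> y))))"
      by (rule infsum_cmult_right'[symmetric])
    moreover have "ennreal (\<Sum>\<^sub>\<infinity>y. ?k * (p y * (\<phi> y * exp (- (fst q + snd q) * \<phi> y))))
        = (\<integral>\<^sup>+ y. F y q \<partial>count_space UNIV)"
      unfolding F_def
    proof (rule ennreal_infsum_nn)
      fix y
      have "0 \<le> p y * (\<phi> y * exp (- (fst q + snd q) * \<phi> y))"
        using p0[of y] f0[of y] by (intro mult_nonneg_nonneg) auto
      then show "0 \<le> ?k * (p y * (\<phi> y * exp (- (fst q + snd q) * \<phi> y)))" using k0 by simp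
    next
      show "(\<lambda>y. ?k * (p y * (\<phi> y * exp (- (fst q + snd q) * \<phi> y)))) summable_on UNIV"
        by (rule summable_on_cmult_right[OF sm])
    qed
    ultimately show ?thesis by simp
  qed
  have "(\<integral>\<^sup>+ q. ennreal (c * (indicator {0..} (fst q) * indicator {0..} (snd q)) *
            (\<Sum>\<^sub>\<infinity>y. p y * (\<phi> y * exp (- (fst q + snd q) * \<phi> y)))) \<partial>lborel)
      = (\<integral>\<^sup>+ q. \<integral>\<^sup>+ y. F y q \<partial>count_space UNIV \<partial>lborel)"
    by (rule nn_integral_cong) (rule pt)
  also have "\<dots> = (\<integral>\<^sup>+ y. \<integral>\<^sup>+ q. F y q \<partial>lborel \<partial>count_space UNIV)"
  proof (rule nn_integral_count_space_nn_integral)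
    fix y
    have "F y \<in> borel_measurable (lborel \<Otimes>\<^sub>M lborel)" unfolding F_def by measurable
    then show "F y \<in> borel_measurable lborel" by (simp add: lborel_prod)
  qed simp
  also have "\<dots> = (\<integral>\<^sup>+ y. ennreal (c * p y / \<phi> y) \<partial>count_space UNIV)"
  proof (rule nn_integral_cong)
    fix y
    have "(\<integral>\<^sup>+ q. F y q \<partial>lborel) = (\<integral>\<^sup>+ q. ennreal ((c * p y * \<phi> y) * (indicator {0..} (fst q) * indicator {0..} (snd q)) * exp (- (fst q + snd q) * \<phi> y)) \<partial>lborel)"
      unfolding F_def by (rule nn_integral_cong) (simp add: mult_ac)
    also have "\<dots> = ennreal (c * p y * \<phi> y / (\<phi> y)^2)"
      by (rule exp2d) (use c0 p0[of y] f0[of y] in \<open>auto intro!: mult_nonneg_nonneg less_imp_le\<close>)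
    also have "c * p y * \<phi> y / (\<phi> y)^2 = c * p y / \<phi> y" using f0[of y] by (simp add: power2_eq_square)
    finally show "(\<integral>\<^sup>+ q. F y q \<partial>lborel) = ennreal (c * p y / \<phi> y)" .
  qed
  also have "\<dots> \<le> (\<integral>\<^sup>+ y. ennreal (c / m * p y) \<partial>count_space UNIV)"
  proof (rule nn_integral_mono)
    fix y
    have "c * p y / \<phi> y \<le> c * p y / m"
      using c0 p0[of y] fm[of y] m0 by (intro divide_left_mono) auto
    then show "ennreal (c * p y / \<phi> y) \<le> ennreal (c / m * p y)" by (simp add: ennreal_leI)
  qed
  also have "\<dots> = ennreal (\<Sum>\<^sub>\<infinity>y. c / m * p y)"
    by (rule ennreal_infsum_nn[symmetric]) (use c0 m0 p0 summable_on_cmult_right[OF psum, of "c / m"] in auto)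
  also have "\<dots> = ennreal (c / m)" using infsum_cmult_right'[of "c / m" p UNIV] p1 by simp
  finally show ?thesis .
qed

theorem lemmaD4:
  fixes pt pg r :: "'x \<Rightarrow> 'y::countable \<Rightarrow> real"
    and \<beta> :: real and n :: nat and x :: 'x
  assumes pt_pos: "\<And>x y. pt x y > 0"
    and pg_pos: "\<And>x y. pg x y > 0"
    and pt_dist: "\<And>x. (pt x has_sum 1) UNIV"
    and pg_dist: "\<And>x. (pg x has_sum 1) UNIV"
    and beta_pos: "\<beta> > 0"
    and n_ge: "n \<ge> 1"
    and max_ex: "\<exists>xm ym. \<forall>x' y'. phi_beta pt pg r \<beta> x' y' \<le> phi_beta pt pg r \<beta> xm ym"
    and min_ex: "\<exists>xm ym. \<forall>x' y'. phi_beta pt pg r \<beta> xm ym \<le> phi_beta pt pg r \<beta> x' y'"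
  shows "I1 (Phi_beta pt pg r \<beta> x) n
           \<le> ennreal (4 / real n ^ 2 * (phi_max pt pg r \<beta> / phi_min pt pg r \<beta>))"
proof -
  obtain xM yM where hM: "\<And>x' y'. phi_beta pt pg r \<beta> x' y' \<le> phi_beta pt pg r \<beta> xM yM" using max_ex by blast
  obtain xm ym where hm: "\<And>x' y'. phi_beta pt pg r \<beta> xm ym \<le> phi_beta pt pg r \<beta> x' y'" using min_ex by blast
  define M where "M = phi_beta pt pg r \<beta> xM yM"
  define m where "m = phi_beta pt pg r \<beta> xm ym"
  have Mdef: "phi_max pt pg r \<beta> = M"
    unfolding phi_max_def M_def
    by (rule cSup_eq_maximum) (use hM in \<open>auto intro: image_eqI[of _ _ "(xM, yM)"]\<close>)
  have mdef: "phi_min pt pg r \<beta> = m"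
    unfolding phi_min_def m_def
    by (rule cInf_eq_minimum) (use hm in \<open>auto intro: image_eqI[of _ _ "(xm, ym)"]\<close>)
  have phipos: "phi_beta pt pg r \<beta> x' y' > 0" for x' y'
    unfolding phi_beta_def using pt_pos[of x' y'] pg_pos[of x' y'] by simp
  define \<phi> where "\<phi> = phi_beta pt pg r \<beta> x"
  define p where "p = pg x"
  have m0: "m > 0" unfolding m_def by (rule phipos)
  have fm: "m \<le> \<phi> y" for y unfolding m_def \<phi>_def by (rule hm)
  have fM: "\<phi> y \<le> M" for y unfolding M_def \<phi>_def by (rule hM)
  have f0: "0 \<le> \<phi> y" for y using fm[of y] m0 by linarith
  have M0: "M > 0" using fm[of undefined] fM[of undefined] m0 by linarith
  have p0: "p y \<ge> 0" for y unfolding p_def using pg_pos[of x y] by simp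
  have ps: "(p has_sum 1) UNIV" unfolding p_def by (rule pg_dist)
  have psum: "p summable_on UNIV" using ps by (auto simp: summable_on_def)
  have p1: "(\<Sum>\<^sub>\<infinity>y. p y) = 1" using ps by (rule infsumI)
  define Phi where "Phi = Phi_beta pt pg r \<beta> x"
  define g where "g = (\<lambda>s. \<Sum>\<^sub>\<infinity>y. p y * (\<phi> y * exp (- s * \<phi> y)))"
  have PhiE: "Phi = (\<lambda>s. \<Sum>\<^sub>\<infinity>y. p y * ((\<lambda>_. 1) y * exp (- s * \<phi> y)))"
    by (simp add: Phi_def Phi_beta_def fun_eq_iff p_def \<phi>_def)
  have dPhi: "deriv Phi s = - g s" for s
  proof -
    have "(Phi has_field_derivative - (\<Sum>\<^sub>\<infinity>y. p y * ((\<lambda>_. 1) y * \<phi> y * exp (- s * \<phi> y)))) (at s)"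
      unfolding PhiE by (rule deriv_S[OF p0 psum _ f0 fM M0, of _ 1]) simp
    then show ?thesis unfolding g_def by (simp add: DERIV_imp_deriv)
  qed
  have Phi01: "0 \<le> Phi s \<and> Phi s \<le> 1" if "s \<ge> 0" for s
  proof -
    have e: "Phi s = (\<Sum>\<^sub>\<infinity>y. p y * exp (- s * \<phi> y))" by (simp add: PhiE)
    have "0 \<le> Phi s" unfolding e using p0 by (intro infsum_nonneg) simp
    moreover have "\<bar>Phi s\<bar> \<le> 1 * (\<Sum>\<^sub>\<infinity>y. p y)" unfolding e
      by (rule abs_infsum_le[OF p0 psum]) (use that f0 in \<open>simp add: mult_nonneg_nonneg\<close>)
    ultimately show ?thesis using p1 by simp
  qed
  have g0: "g t \<ge> 0" for t unfolding g_def using p0 f0 by (intro infsum_nonneg) simp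
  have gM: "g 0 \<le> M"
  proof -
    have "\<bar>g 0\<bar> \<le> M * (\<Sum>\<^sub>\<infinity>y. p y)" unfolding g_def
      by (rule abs_infsum_le[OF p0 psum]) (use f0 fM in simp)
    then show ?thesis using p1 by simp
  qed
  define N where "N = real n"
  have N1: "N \<ge> 1" using n_ge unfolding N_def by simp
  define K where "K = (N^2 + N) / N^4 * g 0"
  have K0: "K \<ge> 0" unfolding K_def using N1 g0[of 0] by simp
  have pw: "indicator (R1 Phi n) q *
        ((N ^ 2 * Phi (fst q) * Phi (snd q) + N) * (- deriv Phi 0) *
         (- deriv Phi (fst q + snd q)) * exp (N * (Phi (fst q) * Phi (snd q) - 1)))
      \<le> K * (indicator {0..} (fst q) * indicator {0..} (snd q)) * g (fst q + snd q)" for q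
  proof (cases "q \<in> R1 Phi n")
    case False
    then show ?thesis using K0 g0 by simp
  next
    case True
    obtain s1 s2 where q: "q = (s1, s2)" by (cases q)
    have s1: "s1 \<ge> 0" and s2: "s2 \<ge> 0" and mn: "min (Phi s1) (Phi s2) \<le> 1 - p_n n"
      using True unfolding q R1_def by auto
    define P where "P = Phi s1 * Phi s2"
    have P0: "0 \<le> P" and P1: "P \<le> 1" unfolding P_def using Phi01[OF s1] Phi01[OF s2] by (auto intro: mult_le_one)
    have Pp: "P \<le> 1 - p_n n"
    proof -
      have "P \<le> Phi s1" unfolding P_def using Phi01[OF s1] Phi01[OF s2] by (simp add: mult_left_le)
      moreover have "P \<le> Phi s2" unfolding P_def using Phi01[OF s1] Phi01[OF s2] by (simp add: mult_le_cancel_right1 mult_left_le_one_le)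
      ultimately show ?thesis using mn by linarith
    qed
    have E: "exp (N * (P - 1)) \<le> 1 / N^4"
    proof -
      have "N * (P - 1) \<le> N * (- p_n n)" using Pp N1 by (intro mult_left_mono) auto
      also have "N * (- p_n n) = - ln (N^4)" unfolding p_n_def N_def using N1 N_def by simp
      finally have "exp (N * (P - 1)) \<le> exp (- ln (N^4))" by simp
      also have "\<dots> = 1 / N^4" using N1 by (simp add: exp_minus inverse_eq_divide)
      finally show ?thesis .
    qed
    have A: "N^2 * P + N \<le> N^2 + N" using P1 N1 by (simp add: mult_left_le)
    have "(N ^ 2 * Phi s1 * Phi s2 + N) * (- deriv Phi 0) * (- deriv Phi (s1 + s2)) * exp (N * (Phi s1 * Phi s2 - 1))
        = (N^2 * P + N) * (g 0 * g (s1 + s2)) * exp (N * (P - 1))" unfolding P_def dPhi by (simp add: mult_ac)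
    also have "\<dots> \<le> (N^2 + N) * (g 0 * g (s1 + s2)) * (1 / N^4)"
      using A E g0 P0 N1 by (intro mult_mono mult_nonneg_nonneg) auto
    also have "\<dots> = K * g (s1 + s2)" unfolding K_def by simp
    finally show ?thesis using True s1 s2 unfolding q by simp
  qed
  have step1: "(\<integral>\<^sup>+ q. ennreal (indicator (R1 Phi n) q *
        ((real n ^ 2 * Phi (fst q) * Phi (snd q) + real n) * (- deriv Phi 0) *
         (- deriv Phi (fst q + snd q)) * exp (real n * (Phi (fst q) * Phi (snd q) - 1)))) \<partial>lborel)
      \<le> (\<integral>\<^sup>+ q. ennreal (K * (indicator {0..} (fst q) * indicator {0..} (snd q)) *
            (\<Sum>\<^sub>\<infinity>y. p y * (\<phi> y * exp (- (fst q + snd q) * \<phi> y)))) \<partial>lborel)"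
    by (rule nn_integral_mono, rule ennreal_leI) (use pw[unfolded N_def] in \<open>simp only: g_def\<close>)
  also have "\<dots> \<le> ennreal (K / m)"
    by (rule int_bound[OF p0 ps fm fM m0 K0])
  finally have step2: "I1 Phi n \<le> ennreal (1 / (1 - exp (- N))) * ennreal (K / m)"
    unfolding I1_def N_def by (rule mult_left_mono) simp
  have ex: "exp (- N) \<le> 1 / 2"
  proof -
    have "exp (- N) \<le> exp (- 1)" using N1 by simp
    also have "exp (- 1) = 1 / exp (1::real)" by (metis exp_minus inverse_eq_divide)
    also have "\<dots> \<le> 1 / 2" using exp_ge_add_one_self[of 1] by (intro divide_left_mono) auto
    finally show ?thesis .
  qed
  have real_ineq: "1 / (1 - exp (- N)) * (K / m) \<le> 4 / N ^ 2 * (M / m)"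
  proof -
    have c1: "1 / (1 - exp (- N)) \<le> 2" using ex N1 by (simp add: divide_le_eq)
    have c2: "(N^2 + N) / N^4 \<le> 2 / N^2" using N1 by (simp add: field_simps power_def)
    have "1 / (1 - exp (- N)) * (K / m) = (1 / (1 - exp (- N))) * ((N^2 + N) / N^4) * (g 0 / m)"
      unfolding K_def by simp
    also have "\<dots> \<le> 2 * (2 / N^2) * (M / m)"
      using c1 c2 gM g0[of 0] m0 ex N1 by (intro mult_mono divide_right_mono) auto
    finally show ?thesis by simp
  qed
  have "ennreal (1 / (1 - exp (- N))) * ennreal (K / m) = ennreal (1 / (1 - exp (- N)) * (K / m))"
    using ex K0 m0 N1 by (subst ennreal_mult) auto
  also have "\<dots> \<le> ennreal (4 / N ^ 2 * (M / m))" using real_ineq by (rule ennreal_leI)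
  finally show ?thesis using step2 unfolding Phi_def Mdef mdef N_def by simp
qed

end
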